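(* For $\tau>0$, $\zeta>0$, $s>0$, consider estimating $\theta\in\mathbb{R}$ from $\mathbf{w}\sim\mathcal{N}\big((s\theta+\delta,\theta)^\top,I_2\big)$ where $|\theta|\le\tau$ and $|\delta|\le\zeta$. Define $$R_L(\tau,\zeta,s)=\min_{\hat\theta\text{ linear}}\max_{|\theta|\le\tau,|\delta|\le\zeta}\mathbb{E}(\hat\theta(\mathbf{w})-\theta)^2,\qquad R_N(\tau,\zeta,s)=\inf_{\hat\theta}\max_{|\theta|\le\tau,|\delta|\le\zeta}\mathbb{E}(\hat\theta(\mathbf{w})-\theta)^2,$$ where linear means $\hat\theta(\mathbf{w})=aw_1+bw_2$ with $a,b\in\mathbb{R}$, and the second infimum is over all measurable $\hat\theta:\mathbb{R}^2\to\mathbb{R}$. Then $R_L(\tau,\zeta,s)\le\frac{27}{2}R_N(\tau,\zeta,s)$. *)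

theory Defs
  imports "HOL-Probability.Probability"
begin

definition gauss2 :: "real \<Rightarrow> real \<Rightarrow> (real \<times> real) measure" where
  "gauss2 m1 m2 = density (lborel \<Otimes>\<^sub>M lborel)
     (\<lambda>(x, y). ennreal (normal_density m1 1 x * normal_density m2 1 y))"

definition risk :: "real \<Rightarrow> ((real \<times> real) \<Rightarrow> real) \<Rightarrow> real \<Rightarrow> real \<Rightarrow> ennreal" where
  "risk s est \<theta> \<delta> = (\<integral>\<^sup>+ w. ennreal ((est w - \<theta>)\<^sup>2) \<partial>gauss2 (s * \<theta> + \<delta>) \<theta>)"

definition max_risk :: "real \<Rightarrow> real \<Rightarrow> real \<Rightarrow> ((real \<times> real) \<Rightarrow> real) \<Rightarrow> ennreal" where
  "max_risk \<tau> \<zeta> s est = (SUP (\<theta>, \<delta>) \<in> {(\<theta>, \<delta>). \<bar>\<theta>\<bar> \<le> \<tau> \<and> \<bar>\<delta>\<bar> \<le> \<zeta>}. risk s est \<theta> \<delta>)"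

definition R_L :: "real \<Rightarrow> real \<Rightarrow> real \<Rightarrow> ennreal" where
  "R_L \<tau> \<zeta> s = (INF (a, b) \<in> (UNIV :: (real \<times> real) set).
       max_risk \<tau> \<zeta> s (\<lambda>w. a * fst w + b * snd w))"

definition R_N :: "real \<Rightarrow> real \<Rightarrow> real \<Rightarrow> ennreal" where
  "R_N \<tau> \<zeta> s = (INF est \<in> borel_measurable (borel \<Otimes>\<^sub>M borel). max_risk \<tau> \<zeta> s est)"

end

theory Submission
  imports Defs
begin


lemma N0: "(\<integral>\<^sup>+ x. ennreal (normal_density m 1 x) \<partial>lborel) = 1"
  by (subst nn_integral_eq_integral) (auto simp: integral_normal_density integrable_normal_density)

lemma N2: "(\<integral>\<^sup>+ x. ennreal (normal_density m 1 x * (\<alpha> * x - \<beta>)\<^sup>2) \<partial>lborel)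
   = ennreal (\<alpha>\<^sup>2 + (\<alpha> * m - \<beta>)\<^sup>2)"
proof -
  have e: "has_bochner_integral lborel (\<lambda>x. normal_density m 1 x * (x - m) ^ (2 * 1)) 1"
    using normal_moment_even[of 1 m 1] by simp
  have o: "has_bochner_integral lborel (\<lambda>x. normal_density m 1 x * (x - m) ^ (2 * 0 + 1)) 0"
    using normal_moment_odd[of 1 m 0] by simp
  have c: "has_bochner_integral lborel (\<lambda>x. normal_density m 1 x) 1"
    using integrable_normal_density[of 1 m] integral_normal_density[of 1 m]
    by (metis has_bochner_integral_integrable zero_less_one)
  have "has_bochner_integral lborel (\<lambda>x. \<alpha>\<^sup>2 * (normal_density m 1 x * (x - m) ^ (2 * 1))
     + 2 * \<alpha> * (\<alpha> * m - \<beta>) * (normal_density m 1 x * (x - m) ^ (2 * 0 + 1))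
     + (\<alpha> * m - \<beta>)\<^sup>2 * normal_density m 1 x) (\<alpha>\<^sup>2 * 1 + 2 * \<alpha> * (\<alpha> * m - \<beta>) * 0 + (\<alpha> * m - \<beta>)\<^sup>2 * 1)"
    by (intro has_bochner_integral_add has_bochner_integral_mult_right e o c)
  also have "(\<lambda>x. \<alpha>\<^sup>2 * (normal_density m 1 x * (x - m) ^ (2 * 1))
     + 2 * \<alpha> * (\<alpha> * m - \<beta>) * (normal_density m 1 x * (x - m) ^ (2 * 0 + 1))
     + (\<alpha> * m - \<beta>)\<^sup>2 * normal_density m 1 x) = (\<lambda>x. normal_density m 1 x * (\<alpha> * x - \<beta>)\<^sup>2)"
    by (rule ext) (simp add: power2_eq_square algebra_simps)
  finally have h: "has_bochner_integral lborel (\<lambda>x. normal_density m 1 x * (\<alpha> * x - \<beta>)\<^sup>2) (\<alpha>\<^sup>2 + (\<alpha> * m - \<beta>)\<^sup>2)"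
    by simp
  show ?thesis
    using h by (subst nn_integral_eq_integral) (auto simp: has_bochner_integral_iff)
qed

lemma LL_meas: "est \<in> borel_measurable (borel \<Otimes>\<^sub>M borel) \<Longrightarrow> est \<in> borel_measurable (lborel \<Otimes>\<^sub>M lborel)"
  by (simp add: measurable_cong_sets[OF sets_pair_measure_cong[OF sets_lborel sets_lborel] refl])

lemma gauss2_nn:
  assumes "f \<in> borel_measurable (lborel \<Otimes>\<^sub>M lborel)"
  shows "(\<integral>\<^sup>+ w. f w \<partial>gauss2 m n) = (\<integral>\<^sup>+ w. ennreal (normal_density m 1 (fst w) * normal_density n 1 (snd w)) * f w \<partial>(lborel \<Otimes>\<^sub>M lborel))"
  unfolding gauss2_def
  by (subst nn_integral_density) (auto intro!: nn_integral_cong simp: split_beta assms)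

lemma gauss2_prod:
  assumes [measurable]: "f \<in> borel_measurable borel" "g \<in> borel_measurable borel"
    and "\<And>x. f x \<ge> 0" "\<And>x. g x \<ge> 0"
  shows "(\<integral>\<^sup>+ w. ennreal (f (fst w) * g (snd w)) \<partial>gauss2 m n) =
    (\<integral>\<^sup>+ x. ennreal (normal_density m 1 x * f x) \<partial>lborel) * (\<integral>\<^sup>+ y. ennreal (normal_density n 1 y * g y) \<partial>lborel)"
proof -
  have "(\<integral>\<^sup>+ w. ennreal (f (fst w) * g (snd w)) \<partial>gauss2 m n) =
     (\<integral>\<^sup>+ w. ennreal (normal_density m 1 (fst w) * normal_density n 1 (snd w)) * ennreal (f (fst w) * g (snd w)) \<partial>(lborel \<Otimes>\<^sub>M lborel))"
    by (rule gauss2_nn) measurable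
  also have "\<dots> = (\<integral>\<^sup>+ x. \<integral>\<^sup>+ y. ennreal (normal_density m 1 x * f x) * ennreal (normal_density n 1 y * g y) \<partial>lborel \<partial>lborel)"
    by (subst lborel.nn_integral_fst[symmetric]) (auto intro!: nn_integral_cong simp: ennreal_mult''[symmetric] assms mult_ac)
  also have "\<dots> = (\<integral>\<^sup>+ x. ennreal (normal_density m 1 x * f x) * (\<integral>\<^sup>+ y. ennreal (normal_density n 1 y * g y) \<partial>lborel) \<partial>lborel)"
    by (rule nn_integral_cong) (rule nn_integral_cmult, measurable)
  also have "\<dots> = (\<integral>\<^sup>+ x. ennreal (normal_density m 1 x * f x) \<partial>lborel) * (\<integral>\<^sup>+ y. ennreal (normal_density n 1 y * g y) \<partial>lborel)"
    by (rule nn_integral_multc) measurable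
  finally show ?thesis .
qed

lemma risk_fst: "risk s (\<lambda>w. a * fst w + 0 * snd w) \<theta> \<delta> = ennreal (a\<^sup>2 + (a * (s * \<theta> + \<delta>) - \<theta>)\<^sup>2)"
proof -
  have "risk s (\<lambda>w. a * fst w + 0 * snd w) \<theta> \<delta> = (\<integral>\<^sup>+ w. ennreal ((\<lambda>x. (a * x - \<theta>)\<^sup>2) (fst w) * (\<lambda>y. 1) (snd w)) \<partial>gauss2 (s * \<theta> + \<delta>) \<theta>)"
    unfolding risk_def by simp
  also have "\<dots> = ennreal (a\<^sup>2 + (a * (s * \<theta> + \<delta>) - \<theta>)\<^sup>2)"
    by (subst gauss2_prod) (auto simp: N0 N2)
  finally show ?thesis .
qed

lemma risk_snd: "risk s (\<lambda>w. 0 * fst w + b * snd w) \<theta> \<delta> = ennreal (b\<^sup>2 + (b * \<theta> - \<theta>)\<^sup>2)"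
proof -
  have "risk s (\<lambda>w. 0 * fst w + b * snd w) \<theta> \<delta> = (\<integral>\<^sup>+ w. ennreal ((\<lambda>x. 1) (fst w) * (\<lambda>y. (b * y - \<theta>)\<^sup>2) (snd w)) \<partial>gauss2 (s * \<theta> + \<delta>) \<theta>)"
    unfolding risk_def by simp
  also have "\<dots> = ennreal (b\<^sup>2 + (b * \<theta> - \<theta>)\<^sup>2)"
    by (subst gauss2_prod) (auto simp: N0 N2)
  finally show ?thesis .
qed

lemma mass: "(\<integral>\<^sup>+ w. ennreal (normal_density m 1 (fst w) * normal_density n 1 (snd w)) \<partial>(lborel \<Otimes>\<^sub>M lborel)) = 1"
proof -
  have "(\<integral>\<^sup>+ w. ennreal (normal_density m 1 (fst w) * normal_density n 1 (snd w)) \<partial>(lborel \<Otimes>\<^sub>M lborel))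
    = (\<integral>\<^sup>+ w. ennreal ((\<lambda>x. 1) (fst w) * (\<lambda>y. 1) (snd w)) \<partial>gauss2 m n)"
    by (subst gauss2_nn) (auto simp: ennreal_mult''[symmetric] mult_ac)
  also have "\<dots> = 1" by (subst gauss2_prod) (auto simp: N0)
  finally show ?thesis .
qed

lemma R_L_le:
  assumes "\<tau> > 0" "\<zeta> > 0" "s > 0"
  shows "R_L \<tau> \<zeta> s \<le> ennreal (min (\<tau>\<^sup>2) (min 1 ((1 + \<zeta>\<^sup>2) / s\<^sup>2)))"
proof -
  have lin: "R_L \<tau> \<zeta> s \<le> max_risk \<tau> \<zeta> s (\<lambda>w. a * fst w + b * snd w)" for a b
    unfolding R_L_def by (rule INF_lower2[of "(a,b)"]) auto
  have 1: "R_L \<tau> \<zeta> s \<le> ennreal (\<tau>\<^sup>2)"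
  proof -
    have "max_risk \<tau> \<zeta> s (\<lambda>w. 0 * fst w + 0 * snd w) \<le> ennreal (\<tau>\<^sup>2)"
      unfolding max_risk_def
    proof (rule SUP_least, clarify)
      fix \<theta> \<delta> :: real assume "\<bar>\<theta>\<bar> \<le> \<tau>" "\<bar>\<delta>\<bar> \<le> \<zeta>"
      then have "\<theta>\<^sup>2 \<le> \<tau>\<^sup>2" by (metis abs_ge_zero power2_abs power_mono)
      then show "risk s (\<lambda>w. 0 * fst w + 0 * snd w) \<theta> \<delta> \<le> ennreal (\<tau>\<^sup>2)"
        using risk_fst[of s 0 \<theta> \<delta>] by simp
    qed
    then show ?thesis using lin[of 0 0] by simp
  qed
  have 2: "R_L \<tau> \<zeta> s \<le> ennreal 1"
  proof -
    have "max_risk \<tau> \<zeta> s (\<lambda>w. 0 * fst w + 1 * snd w) \<le> ennreal 1"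
      unfolding max_risk_def
      by (rule SUP_least, clarify, subst risk_snd, simp)
    then show ?thesis using lin[of 0 1] by simp
  qed
  have 3: "R_L \<tau> \<zeta> s \<le> ennreal ((1 + \<zeta>\<^sup>2) / s\<^sup>2)"
  proof -
    have "max_risk \<tau> \<zeta> s (\<lambda>w. (1/s) * fst w + 0 * snd w) \<le> ennreal ((1 + \<zeta>\<^sup>2) / s\<^sup>2)"
      unfolding max_risk_def
    proof (rule SUP_least, clarify)
      fix \<theta> \<delta> :: real assume "\<bar>\<theta>\<bar> \<le> \<tau>" "\<bar>\<delta>\<bar> \<le> \<zeta>"
      then have "\<delta>\<^sup>2 \<le> \<zeta>\<^sup>2" by (metis abs_ge_zero power2_abs power_mono)
      moreover have "(1/s)\<^sup>2 + ((1/s) * (s * \<theta> + \<delta>) - \<theta>)\<^sup>2 = (1 + \<delta>\<^sup>2) / s\<^sup>2"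
        using assms by (simp add: field_simps power2_eq_square)
      ultimately have "(1/s)\<^sup>2 + ((1/s) * (s * \<theta> + \<delta>) - \<theta>)\<^sup>2 \<le> (1 + \<zeta>\<^sup>2) / s\<^sup>2"
        using assms by (simp add: divide_right_mono)
      then show "risk s (\<lambda>w. (1/s) * fst w + 0 * snd w) \<theta> \<delta> \<le> ennreal ((1 + \<zeta>\<^sup>2) / s\<^sup>2)"
        by (subst risk_fst) (rule ennreal_leI)
    qed
    then show ?thesis using lin[of "1/s" 0] by simp
  qed
  show ?thesis using 1 2 3
    by (simp add: min_def)
qed


lemma amgm:
  fixes X Y g t u :: real
  assumes "X \<ge> 0" "Y \<ge> 0" "g \<ge> 0" "g\<^sup>2 = X * Y" "t > 0"
  shows "2 * \<bar>u\<bar> * g \<le> t * u\<^sup>2 * Y + X / t"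
proof (rule power2_le_imp_le)
  have "(t * u\<^sup>2 * Y + X / t)\<^sup>2 - (2 * \<bar>u\<bar> * g)\<^sup>2 = (t * u\<^sup>2 * Y - X / t)\<^sup>2"
    using assms by (simp add: power2_eq_square field_simps)
  then show "(2 * \<bar>u\<bar> * g)\<^sup>2 \<le> (t * u\<^sup>2 * Y + X / t)\<^sup>2"
    by (metis diff_ge_0_iff_ge zero_le_power2)
  show "0 \<le> t * u\<^sup>2 * Y + X / t" using assms by simp
qed

lemma pair1: "(exp (- \<mu>\<^sup>2 / 2) * normal_density 0 1 x)\<^sup>2 = normal_density (-\<mu>) 1 x * normal_density \<mu> 1 x"
proof -
  have e: "exp (- \<mu>\<^sup>2 / 2) * exp (- \<mu>\<^sup>2 / 2) * (exp (- x\<^sup>2 / 2) * exp (- x\<^sup>2 / 2))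
      = exp (- (x + \<mu>)\<^sup>2 / 2) * exp (- (x - \<mu>)\<^sup>2 / 2)"
  proof -
    have "- \<mu>\<^sup>2 / 2 + - \<mu>\<^sup>2 / 2 + (- x\<^sup>2 / 2 + - x\<^sup>2 / 2) = - (x + \<mu>)\<^sup>2 / 2 + - (x - \<mu>)\<^sup>2 / 2"
      by (simp add: power2_eq_square field_simps)
    then show ?thesis by (simp add: exp_add[symmetric])
  qed
  show ?thesis
    unfolding normal_density_def
    using e by (simp add: power2_eq_square mult_ac)
qed

lemma lower:
  fixes est :: "real \<times> real \<Rightarrow> real"
  assumes meas: "est \<in> borel_measurable (borel \<Otimes>\<^sub>M borel)"
    and D: "\<Delta> > 0" "\<Delta> \<le> \<tau>" and d: "0 \<le> d" "d \<le> \<zeta>"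
  shows "ennreal (\<Delta>\<^sup>2 * exp (- (\<Delta>\<^sup>2 + (s * \<Delta> - d)\<^sup>2))) \<le> max_risk \<tau> \<zeta> s est"
proof -
  have em[measurable]: "est \<in> borel_measurable (lborel \<Otimes>\<^sub>M lborel)" using LL_meas[OF meas] .
  define \<mu> where "\<mu> = s * \<Delta> - d"
  define A where "A = exp (- (\<mu>\<^sup>2 + \<Delta>\<^sup>2) / 2)"
  have Apos: "A > 0" unfolding A_def by simp
  define t where "t = 1 / (\<Delta> * A)"
  have tpos: "t > 0" unfolding t_def using D Apos by simp
  define p0 where "p0 = (\<lambda>w::real\<times>real. normal_density (-\<mu>) 1 (fst w) * normal_density (-\<Delta>) 1 (snd w))"
  define p1 where "p1 = (\<lambda>w::real\<times>real. normal_density \<mu> 1 (fst w) * normal_density \<Delta> 1 (snd w))"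
  define g where "g = (\<lambda>w::real\<times>real. A * (normal_density 0 1 (fst w) * normal_density 0 1 (snd w)))"
  have [measurable]: "p0 \<in> borel_measurable (lborel \<Otimes>\<^sub>M lborel)" "p1 \<in> borel_measurable (lborel \<Otimes>\<^sub>M lborel)"
    unfolding p0_def p1_def by measurable
  have p0nn: "p0 w \<ge> 0" and p1nn: "p1 w \<ge> 0" and gnn: "g w \<ge> 0" for w
    unfolding p0_def p1_def g_def using Apos by auto
  have gsq: "(g w)\<^sup>2 = p0 w * p1 w" for w
  proof -
    have "A = exp (- \<mu>\<^sup>2 / 2) * exp (- \<Delta>\<^sup>2 / 2)" unfolding A_def by (simp add: exp_add[symmetric] field_simps)
    then have "(g w)\<^sup>2 = (exp (- \<mu>\<^sup>2 / 2) * normal_density 0 1 (fst w))\<^sup>2 * (exp (- \<Delta>\<^sup>2 / 2) * normal_density 0 1 (snd w))\<^sup>2"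
      unfolding g_def by (simp add: power_mult_distrib mult_ac)
    then show ?thesis unfolding pair1 p0_def p1_def by simp
  qed
  define R0 where "R0 = risk s est (-\<Delta>) d"
  define R1 where "R1 = risk s est \<Delta> (-d)"
  have R0le: "R0 \<le> max_risk \<tau> \<zeta> s est"
    unfolding R0_def max_risk_def by (rule SUP_upper2[of "(-\<Delta>, d)"]) (use D d in auto)
  have R1le: "R1 \<le> max_risk \<tau> \<zeta> s est"
    unfolding R1_def max_risk_def by (rule SUP_upper2[of "(\<Delta>, -d)"]) (use D d in auto)
  have R0eq: "R0 = (\<integral>\<^sup>+ w. ennreal (p0 w * (est w + \<Delta>)\<^sup>2) \<partial>(lborel \<Otimes>\<^sub>M lborel))"
  proof -
    have "s * (-\<Delta>) + d = -\<mu>" unfolding \<mu>_def by simp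
    then show ?thesis unfolding R0_def risk_def
      by (subst gauss2_nn) (auto intro!: nn_integral_cong simp: ennreal_mult''[symmetric] p0_def)
  qed
  have R1eq: "R1 = (\<integral>\<^sup>+ w. ennreal (p1 w * (est w - \<Delta>)\<^sup>2) \<partial>(lborel \<Otimes>\<^sub>M lborel))"
  proof -
    have "s * \<Delta> + - d = \<mu>" unfolding \<mu>_def by simp
    then show ?thesis unfolding R1_def risk_def
      by (subst gauss2_nn) (auto intro!: nn_integral_cong simp: ennreal_mult''[symmetric] p1_def)
  qed
  have m0: "(\<integral>\<^sup>+ w. ennreal (p0 w) \<partial>(lborel \<Otimes>\<^sub>M lborel)) = 1" unfolding p0_def by (rule mass)
  have m1: "(\<integral>\<^sup>+ w. ennreal (p1 w) \<partial>(lborel \<Otimes>\<^sub>M lborel)) = 1" unfolding p1_def by (rule mass)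
  have pt: "4 * \<Delta> * g w \<le> (t * (est w - \<Delta>)\<^sup>2 * p1 w + p0 w / t) + (t * (est w + \<Delta>)\<^sup>2 * p0 w + p1 w / t)" for w
  proof -
    have a1: "2 * \<bar>est w - \<Delta>\<bar> * g w \<le> t * (est w - \<Delta>)\<^sup>2 * p1 w + p0 w / t"
      by (rule amgm) (use p0nn p1nn gnn gsq tpos in auto)
    have a2: "2 * \<bar>est w + \<Delta>\<bar> * g w \<le> t * (est w + \<Delta>)\<^sup>2 * p0 w + p1 w / t"
      by (rule amgm) (use p0nn p1nn gnn gsq tpos in \<open>auto simp: mult.commute\<close>)
    have "2 * \<Delta> \<le> \<bar>est w - \<Delta>\<bar> + \<bar>est w + \<Delta>\<bar>" by linarith
    then have "4 * \<Delta> * g w \<le> 2 * \<bar>est w - \<Delta>\<bar> * g w + 2 * \<bar>est w + \<Delta>\<bar> * g w"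
    proof -
      have "(2 * \<Delta>) * g w \<le> (\<bar>est w - \<Delta>\<bar> + \<bar>est w + \<Delta>\<bar>) * g w"
        by (rule mult_right_mono) (use gnn[of w] \<open>2 * \<Delta> \<le> _\<close> in auto)
      then show ?thesis by (simp add: algebra_simps)
    qed
    then show ?thesis using a1 a2 by linarith
  qed
  have "ennreal (4 * \<Delta> * A) = (\<integral>\<^sup>+ w. ennreal (4 * \<Delta> * A) * ennreal (normal_density 0 1 (fst w) * normal_density 0 1 (snd w)) \<partial>(lborel \<Otimes>\<^sub>M lborel))"
    by (subst nn_integral_cmult) (auto simp: mass)
  also have "\<dots> = (\<integral>\<^sup>+ w. ennreal (4 * \<Delta> * g w) \<partial>(lborel \<Otimes>\<^sub>M lborel))"
    unfolding g_def using D Apos by (intro nn_integral_cong) (simp add: ennreal_mult''[symmetric] mult_ac)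
  also have "\<dots> \<le> (\<integral>\<^sup>+ w. ennreal ((t * (est w - \<Delta>)\<^sup>2 * p1 w + p0 w / t) + (t * (est w + \<Delta>)\<^sup>2 * p0 w + p1 w / t)) \<partial>(lborel \<Otimes>\<^sub>M lborel))"
    by (intro nn_integral_mono ennreal_leI pt)
  also have "\<dots> = (\<integral>\<^sup>+ w. (ennreal t * ennreal (p1 w * (est w - \<Delta>)\<^sup>2) + ennreal (1/t) * ennreal (p0 w)) + (ennreal t * ennreal (p0 w * (est w + \<Delta>)\<^sup>2) + ennreal (1/t) * ennreal (p1 w)) \<partial>(lborel \<Otimes>\<^sub>M lborel))"
    using tpos p0nn p1nn
    by (intro nn_integral_cong) (simp add: ennreal_mult''[symmetric] ennreal_plus[symmetric] mult_ac del: ennreal_plus)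
  also have "\<dots> = (ennreal t * R1 + ennreal (1/t) * 1) + (ennreal t * R0 + ennreal (1/t) * 1)"
    unfolding R0eq R1eq
    by (simp add: nn_integral_add nn_integral_cmult m0 m1)
  finally have main: "ennreal (4 * \<Delta> * A) \<le> (ennreal t * R1 + ennreal (1/t)) + (ennreal t * R0 + ennreal (1/t))" by simp
  show ?thesis
  proof (cases "R0 = \<top> \<or> R1 = \<top>")
    case True
    then have "max_risk \<tau> \<zeta> s est = \<top>" using R0le R1le by (auto simp: top_unique)
    then show ?thesis by simp
  next
    case False
    then obtain r0 r1 where r0: "R0 = ennreal r0" "r0 \<ge> 0" and r1: "R1 = ennreal r1" "r1 \<ge> 0"
      by (metis ennreal_cases)
    have "ennreal (4 * \<Delta> * A) \<le> ennreal ((t * r1 + 1/t) + (t * r0 + 1/t))"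
      using main r0 r1 tpos by (simp add: ennreal_mult''[symmetric] ennreal_plus[symmetric] del: ennreal_plus)
    then have "4 * \<Delta> * A \<le> (t * r1 + 1/t) + (t * r0 + 1/t)"
      using r0 r1 tpos by (subst (asm) ennreal_le_iff) auto
    then have "4 * \<Delta> * A \<le> (r0 + r1) / (\<Delta> * A) + 2 * (\<Delta> * A)"
    proof -
      have "(t * r1 + 1/t) + (t * r0 + 1/t) = (r0 + r1) / (\<Delta> * A) + 2 * (\<Delta> * A)"
        unfolding t_def using D Apos by (simp add: field_simps)
      then show ?thesis using \<open>4 * \<Delta> * A \<le> _\<close> by linarith
    qed
    then have "2 * (\<Delta> * A) \<le> (r0 + r1) / (\<Delta> * A)" by linarith
    then have "2 * (\<Delta> * A) * (\<Delta> * A) \<le> r0 + r1"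
      using D Apos by (simp add: pos_le_divide_eq)
    moreover have "A * A = exp (- (\<Delta>\<^sup>2 + (s * \<Delta> - d)\<^sup>2))"
      unfolding A_def \<mu>_def by (simp add: exp_add[symmetric] field_simps)
    ultimately have "\<Delta>\<^sup>2 * exp (- (\<Delta>\<^sup>2 + (s * \<Delta> - d)\<^sup>2)) \<le> max r0 r1"
      apply -
    proof -
      assume h1: "2 * (\<Delta> * A) * (\<Delta> * A) \<le> r0 + r1" and h2: "A * A = exp (- (\<Delta>\<^sup>2 + (s * \<Delta> - d)\<^sup>2))"
      have "\<Delta>\<^sup>2 * exp (- (\<Delta>\<^sup>2 + (s * \<Delta> - d)\<^sup>2)) = (\<Delta> * A) * (\<Delta> * A)"
        using h2 by (simp add: power2_eq_square mult_ac)
      then show ?thesis using h1 by linarith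
    qed
    then have "ennreal (\<Delta>\<^sup>2 * exp (- (\<Delta>\<^sup>2 + (s * \<Delta> - d)\<^sup>2))) \<le> max R0 R1"
      using r0 r1 by (cases "r0 \<le> r1") (auto simp: max_def intro!: ennreal_leI)
    then show ?thesis using R0le R1le by (meson max.bounded_iff order_trans)
  qed
qed



lemma exp_m1: "exp (-1::real) \<ge> 1/3"
proof -
  have "exp (-1::real) = 1 / exp 1" by (simp add: exp_minus field_simps)
  then show ?thesis using exp_le by (simp add: frac_le)
qed

lemma exp_m2: "exp (-2::real) \<ge> 1/9"
proof -
  have "exp (-2::real) = 1 / (exp 1 * exp 1)" by (simp add: exp_minus exp_add[symmetric] field_simps)
  moreover have "exp 1 * exp 1 \<le> (3::real) * 3" using exp_le by (intro mult_mono) auto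
  ultimately show ?thesis by (simp add: frac_le)
qed

lemma final_ineq:
  fixes \<tau> \<zeta> s :: real
  assumes "\<tau> > 0" "\<zeta> > 0" "s > 0"
  shows "\<exists>\<Delta> d. 0 < \<Delta> \<and> \<Delta> \<le> \<tau> \<and> 0 \<le> d \<and> d \<le> \<zeta> \<and>
     min (\<tau>\<^sup>2) (min 1 ((1 + \<zeta>\<^sup>2) / s\<^sup>2)) \<le> 27/2 * (\<Delta>\<^sup>2 * exp (- (\<Delta>\<^sup>2 + (s * \<Delta> - d)\<^sup>2)))"
proof (cases "\<zeta> \<ge> 1")
  case True
  define \<Delta> where "\<Delta> = min \<tau> (min 1 (\<zeta> / s))"
  have Dpos: "\<Delta> > 0" unfolding \<Delta>_def using assms by simp
  have D1: "\<Delta> \<le> 1" unfolding \<Delta>_def by simp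
  have Dz: "s * \<Delta> \<le> \<zeta>"
  proof -
    have "\<Delta> \<le> \<zeta> / s" unfolding \<Delta>_def by simp
    then have "s * \<Delta> \<le> s * (\<zeta> / s)" using assms by (intro mult_left_mono) auto
    then show ?thesis using assms by simp
  qed
  have U: "min (\<tau>\<^sup>2) (min 1 ((1 + \<zeta>\<^sup>2) / s\<^sup>2)) \<le> 2 * \<Delta>\<^sup>2"
  proof -
    have "\<Delta> = \<tau> \<or> \<Delta> = 1 \<or> \<Delta> = \<zeta> / s" unfolding \<Delta>_def by linarith
    moreover have "(1 + \<zeta>\<^sup>2) / s\<^sup>2 \<le> 2 * (\<zeta> / s)\<^sup>2"
    proof -
      have "1 \<le> \<zeta>\<^sup>2" using True by (simp add: one_le_power)
      then show ?thesis using assms by (simp add: power_divide divide_right_mono)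
    qed
    moreover have "\<tau>\<^sup>2 \<le> 2 * \<tau>\<^sup>2" by simp
    ultimately show ?thesis
      by (elim disjE) (simp_all add: min_le_iff_disj)
  qed
  have E: "exp (- (\<Delta>\<^sup>2 + (s * \<Delta> - s * \<Delta>)\<^sup>2)) \<ge> 1/3"
  proof -
    have "\<Delta>\<^sup>2 \<le> 1" using D1 Dpos by (simp add: power_le_one)
    then have "exp (-1) \<le> exp (- (\<Delta>\<^sup>2 + (s * \<Delta> - s * \<Delta>)\<^sup>2))" by simp
    then show ?thesis using exp_m1 by linarith
  qed
  have "2 * \<Delta>\<^sup>2 \<le> 27/2 * (\<Delta>\<^sup>2 * exp (- (\<Delta>\<^sup>2 + (s * \<Delta> - s * \<Delta>)\<^sup>2)))"
  proof -
    have "\<Delta>\<^sup>2 * (1/3) \<le> \<Delta>\<^sup>2 * exp (- (\<Delta>\<^sup>2 + (s * \<Delta> - s * \<Delta>)\<^sup>2))"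
      using E by (intro mult_left_mono) auto
    then show ?thesis using zero_le_power2[of \<Delta>] by linarith
  qed
  then show ?thesis using U Dpos Dz assms
    by (intro exI[of _ \<Delta>] exI[of _ "s * \<Delta>"]) (auto simp: \<Delta>_def)
next
  case False
  define \<Delta> where "\<Delta> = min \<tau> (min 1 (1 / s))"
  define d where "d = min \<zeta> (s * \<Delta>)"
  have Dpos: "\<Delta> > 0" unfolding \<Delta>_def using assms by simp
  have D1: "\<Delta> \<le> 1" unfolding \<Delta>_def by simp
  have Ds: "s * \<Delta> \<le> 1"
  proof -
    have "\<Delta> \<le> 1 / s" unfolding \<Delta>_def by simp
    then have "s * \<Delta> \<le> s * (1 / s)" using assms by (intro mult_left_mono) auto
    then show ?thesis using assms by simp
  qed
  have dnn: "0 \<le> d" unfolding d_def using assms Dpos by simp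
  have U: "min (\<tau>\<^sup>2) (min 1 ((1 + \<zeta>\<^sup>2) / s\<^sup>2)) \<le> (1 + \<zeta>) * \<Delta>\<^sup>2"
  proof -
    have z2: "\<zeta>\<^sup>2 \<le> \<zeta>" using False assms by (simp add: power2_eq_square mult_le_cancel_right1)
    have "\<Delta> = \<tau> \<or> \<Delta> = 1 \<or> \<Delta> = 1 / s" unfolding \<Delta>_def by linarith
    moreover have "(1 + \<zeta>\<^sup>2) / s\<^sup>2 \<le> (1 + \<zeta>) * (1 / s)\<^sup>2"
      using z2 assms by (simp add: power_divide divide_right_mono)
    moreover have "\<tau>\<^sup>2 \<le> (1 + \<zeta>) * \<tau>\<^sup>2" using assms by simp
    moreover have "1 \<le> (1 + \<zeta>)" using assms by simp
    ultimately show ?thesis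
      by (elim disjE) (simp_all add: min_le_iff_disj)
  qed
  have ex: "\<Delta>\<^sup>2 + (s * \<Delta> - d)\<^sup>2 \<le> 2 - \<zeta>"
  proof -
    have a: "0 \<le> s * \<Delta> - d" "s * \<Delta> - d \<le> 1 - \<zeta>" unfolding d_def using Ds False by auto
    then have "(s * \<Delta> - d)\<^sup>2 \<le> (1 - \<zeta>)\<^sup>2" by (intro power_mono) auto
    also have "(1 - \<zeta>)\<^sup>2 \<le> 1 - \<zeta>" using False assms by (simp add: power2_eq_square mult_le_cancel_right1)
    finally have "(s * \<Delta> - d)\<^sup>2 \<le> 1 - \<zeta>" .
    moreover have "\<Delta>\<^sup>2 \<le> 1" using D1 Dpos by (simp add: power_le_one)
    ultimately show ?thesis by linarith
  qed
  have E: "exp (- (\<Delta>\<^sup>2 + (s * \<Delta> - d)\<^sup>2)) \<ge> (1 + \<zeta>) / 9"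
  proof -
    have "exp (\<zeta> - 2) \<le> exp (- (\<Delta>\<^sup>2 + (s * \<Delta> - d)\<^sup>2))" using ex by simp
    moreover have "exp (\<zeta> - 2) = exp \<zeta> * exp (-2)" by (simp add: exp_add[symmetric])
    moreover have "(1 + \<zeta>) * (1/9) \<le> exp \<zeta> * exp (-2)"
      using exp_m2 exp_ge_add_one_self[of \<zeta>] assms by (intro mult_mono) auto
    ultimately show ?thesis by simp
  qed
  have "(1 + \<zeta>) * \<Delta>\<^sup>2 \<le> 27/2 * (\<Delta>\<^sup>2 * exp (- (\<Delta>\<^sup>2 + (s * \<Delta> - d)\<^sup>2)))"
  proof -
    have "\<Delta>\<^sup>2 * ((1 + \<zeta>) / 9) \<le> \<Delta>\<^sup>2 * exp (- (\<Delta>\<^sup>2 + (s * \<Delta> - d)\<^sup>2))"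
      using E by (intro mult_left_mono) auto
    moreover have "0 \<le> (1 + \<zeta>) * \<Delta>\<^sup>2" using assms by simp
    ultimately show ?thesis by (simp add: field_simps)
  qed
  then show ?thesis using U Dpos dnn assms
    by (intro exI[of _ \<Delta>] exI[of _ d]) (auto simp: \<Delta>_def d_def)
qed

theorem lemma4:
  fixes \<tau> \<zeta> s :: real
  assumes "\<tau> > 0" and "\<zeta> > 0" and "s > 0"
  shows "R_L \<tau> \<zeta> s \<le> ennreal (27 / 2) * R_N \<tau> \<zeta> s"
proof -
  obtain \<Delta> d where D: "0 < \<Delta>" "\<Delta> \<le> \<tau>" "0 \<le> d" "d \<le> \<zeta>" and
    ineq: "min (\<tau>\<^sup>2) (min 1 ((1 + \<zeta>\<^sup>2) / s\<^sup>2)) \<le> 27/2 * (\<Delta>\<^sup>2 * exp (- (\<Delta>\<^sup>2 + (s * \<Delta> - d)\<^sup>2)))"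
    using final_ineq[OF assms] by blast
  have N: "ennreal (\<Delta>\<^sup>2 * exp (- (\<Delta>\<^sup>2 + (s * \<Delta> - d)\<^sup>2))) \<le> R_N \<tau> \<zeta> s"
    unfolding R_N_def by (rule INF_greatest) (rule lower[OF _ D])
  have "R_L \<tau> \<zeta> s \<le> ennreal (min (\<tau>\<^sup>2) (min 1 ((1 + \<zeta>\<^sup>2) / s\<^sup>2)))"
    by (rule R_L_le[OF assms])
  also have "\<dots> \<le> ennreal (27/2 * (\<Delta>\<^sup>2 * exp (- (\<Delta>\<^sup>2 + (s * \<Delta> - d)\<^sup>2))))"
    by (rule ennreal_leI[OF ineq])
  also have "\<dots> = ennreal (27/2) * ennreal (\<Delta>\<^sup>2 * exp (- (\<Delta>\<^sup>2 + (s * \<Delta> - d)\<^sup>2)))"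
    by (rule ennreal_mult) auto
  also have "\<dots> \<le> ennreal (27/2) * R_N \<tau> \<zeta> s"
    by (rule mult_left_mono[OF N]) simp
  finally show ?thesis .
qed

end
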